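(* Consider the sparse sequence model and the data-dependent measure $\Delta^n$ described in the context, with $\lambda_n = O(n^{-(a+1)})$ as $n\to\infty$ for a constant $a>0$, and with $\alpha < 2T$. Then for any sequence $M_n > 1$ with $M_n\to\infty$, \[ \sup_{\theta^\star} \mathsf{E}_{\theta^\star} \Delta^n\bigl(\{\theta\in\mathbb{R}^n : |S_\theta| > M_n |S_{\theta^\star}|\}\bigr) \to 0, \quad n\to\infty. \]
   Context: Model: one observes $Y^n=(Y_1,\ldots,Y_n)^\top$ with $Y_i = \theta_i + Z_i$, $i=1,\ldots,n$, where $\theta\in\mathbb{R}^n$ is unknown and $Z_1,\ldots,Z_n$ are iid copies of a random variable $Z$ with fully known distribution, mean zero, and subgaussian in the sense that $\mathsf{E}\exp(tZ) \le \exp(\sigma^2 t^2/2)$ for all $t\in\mathbb{R}$, for a known constant $\sigma>0$. $T>0$ denotes the upper endpoint of the interval on which the moment generating function of $(Z/\sigma)^2$ exists, i.e. $\mathsf{E} e^{t (Z/\sigma)^2}$ is finite (bounded by a constant) for $t\in(0,T]$. $\mathsf{E}_{\theta^\star}$ denotes expectation when the true mean vector is $\theta^\star$. For $\theta\in\mathbb{R}^n$, $S_\theta=\{i:\theta_i\neq 0\}$ and $|S_\theta|$ is its cardinality. Data-dependent measure: fix constants $\alpha\in(0,1)$, $\gamma>0$ and a sequence $\lambda_n\in(0,1)$. Define $\Delta^n = \bigotimes_{i=1}^n \{\phi_i\, \mathsf{N}(\mu_i,\tau_i^2) + (1-\phi_i)\,\delta_0\}$, where $\mu_i = Y_i$,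 $\tau_i^2 = \sigma^2(\alpha+\gamma)^{-1}$, and $\operatorname{logit}(\phi_i) = \operatorname{logit}(\lambda_n) + \tfrac12\log\tfrac{\gamma}{\alpha+\gamma} + \tfrac{\alpha}{2\sigma^2} Y_i^2$, with $\operatorname{logit}(p)=\log\{p/(1-p)\}$. *)

theory Defs
  imports "HOL-Probability.Probability" "HOL-Library.Landau_Symbols"
begin

definition logit :: "real \<Rightarrow> real" where
  "logit p = ln (p / (1 - p))"

definition expit :: "real \<Rightarrow> real" where
  "expit x = 1 / (1 + exp (- x))"

definition mixture :: "real \<Rightarrow> real measure \<Rightarrow> real measure \<Rightarrow> real measure" where
  "mixture p M N = measure_of UNIV (sets borel)
     (\<lambda>A. ennreal p * emeasure M A + ennreal (1 - p) * emeasure N A)"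

definition gaussian :: "real \<Rightarrow> real \<Rightarrow> real measure" where
  "gaussian mu tau2 = density lborel (\<lambda>x. ennreal (normal_density mu (sqrt tau2) x))"

definition slab_weight :: "real \<Rightarrow> real \<Rightarrow> real \<Rightarrow> real \<Rightarrow> real \<Rightarrow> real" where
  "slab_weight lam alpha gam sg y =
     expit (logit lam + 1/2 * ln (gam / (alpha + gam)) + alpha / (2 * sg\<^sup>2) * y\<^sup>2)"

definition Delta :: "nat \<Rightarrow> real \<Rightarrow> real \<Rightarrow> real \<Rightarrow> real \<Rightarrow> (nat \<Rightarrow> real) \<Rightarrow> (nat \<Rightarrow> real) measure" where
  "Delta n lam alpha gam sg Y = PiM {..<n} (\<lambda>i.
     mixture (slab_weight lam alpha gam sg (Y i))
             (gaussian (Y i) (sg\<^sup>2 / (alpha + gam)))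
             (return borel 0))"

definition supp :: "nat \<Rightarrow> (nat \<Rightarrow> real) \<Rightarrow> nat set" where
  "supp n theta = {i \<in> {..<n}. theta i \<noteq> 0}"

end

theory Submission
  imports Defs "HOL-Real_Asymp.Real_Asymp"
begin

lemma mixture_facts:
  assumes p: "0 \<le> p" "p \<le> 1" and M: "prob_space M" "sets M = sets borel"
    and N: "prob_space N" "sets N = sets borel"
  shows "sets (mixture p M N) = sets borel"
    and "\<And>A. A \<in> sets borel \<Longrightarrow> emeasure (mixture p M N) A = ennreal p * emeasure M A + ennreal (1 - p) * emeasure N A"
    and "prob_space (mixture p M N)"
proof -
  show S: "sets (mixture p M N) = sets borel"
    unfolding mixture_def by (metis sets.sigma_sets_eq space_borel sets_measure_of sets.space_closed)
  have sa: "sigma_algebra UNIV (sets borel)"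
    using sets.sigma_algebra_axioms[of borel] by simp
  have pos: "positive (sets borel) (\<lambda>A. ennreal p * emeasure M A + ennreal (1 - p) * emeasure N A)"
    by (simp add: positive_def)
  have ca: "countably_additive (sets borel) (\<lambda>A. ennreal p * emeasure M A + ennreal (1 - p) * emeasure N A)"
  proof (rule countably_additiveI)
    fix A :: "nat \<Rightarrow> real set"
    assume A: "range A \<subseteq> sets borel" "disjoint_family A" "\<Union> (range A) \<in> sets borel"
    have "(\<Sum>i. ennreal p * emeasure M (A i) + ennreal (1 - p) * emeasure N (A i))
        = (\<Sum>i. ennreal p * emeasure M (A i)) + (\<Sum>i. ennreal (1 - p) * emeasure N (A i))"
      by (rule suminf_add[symmetric]) auto
    also have "\<dots> = ennreal p * (\<Sum>i. emeasure M (A i)) + ennreal (1 - p) * (\<Sum>i. emeasure N (A i))"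
      by (simp add: ennreal_suminf_cmult)
    also have "(\<Sum>i. emeasure M (A i)) = emeasure M (\<Union> (range A))"
      using A M by (intro suminf_emeasure) auto
    also have "(\<Sum>i. emeasure N (A i)) = emeasure N (\<Union> (range A))"
      using A N by (intro suminf_emeasure) auto
    finally show "(\<Sum>i. ennreal p * emeasure M (A i) + ennreal (1 - p) * emeasure N (A i))
        = ennreal p * emeasure M (\<Union> (range A)) + ennreal (1 - p) * emeasure N (\<Union> (range A))" .
  qed
  show E: "\<And>A. A \<in> sets borel \<Longrightarrow> emeasure (mixture p M N) A = ennreal p * emeasure M A + ennreal (1 - p) * emeasure N A"
    unfolding mixture_def using emeasure_measure_of_sigma[OF sa pos ca] by simp
  have sp: "space (mixture p M N) = UNIV"
    using sets_eq_imp_space_eq[OF S] by simp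
  have sM: "space M = UNIV" using sets_eq_imp_space_eq[OF M(2)] by simp
  have sN: "space N = UNIV" using sets_eq_imp_space_eq[OF N(2)] by simp
  show "prob_space (mixture p M N)"
  proof
    have "emeasure (mixture p M N) (space (mixture p M N)) = ennreal p + ennreal (1 - p)"
      using E[of UNIV] sp prob_space.emeasure_space_1[OF M(1)] prob_space.emeasure_space_1[OF N(1)] sM sN
      by simp
    also have "\<dots> = 1" using p by (simp add: ennreal_plus[symmetric] del: ennreal_plus)
    finally show "emeasure (mixture p M N) (space (mixture p M N)) = 1" .
  qed
qed

lemma expit_range: "0 < expit x" "expit x < 1"
proof -
  have "0 < 1 + exp (- x)" by (simp add: add_pos_pos)
  then show "0 < expit x" "expit x < 1" unfolding expit_def by (auto simp: divide_simps)
qed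

lemma expit_le_exp: "expit x \<le> exp x"
proof -
  have "1 \<le> exp x * (1 + exp (- x))"
    by (simp add: distrib_left exp_minus_inverse)
  moreover have "0 < 1 + exp (- x)" by (simp add: add_pos_pos)
  ultimately show ?thesis unfolding expit_def by (simp add: divide_simps)
qed

lemma slab_weight_le:
  assumes "0 < lam" "lam < 1" "alpha > 0" "gam > 0"
  shows "slab_weight lam alpha gam sg y \<le> lam / (1 - lam) * exp (alpha / (2 * sg\<^sup>2) * y\<^sup>2)"
proof -
  have l: "exp (logit lam) = lam / (1 - lam)" unfolding logit_def using assms by simp
  have "ln (gam / (alpha + gam)) \<le> 0" using assms by (simp add: ln_div)
  then have g: "exp (1/2 * ln (gam / (alpha + gam))) \<le> 1" by simp
  have "slab_weight lam alpha gam sg y \<le> exp (logit lam + 1/2 * ln (gam / (alpha + gam)) + alpha / (2 * sg\<^sup>2) * y\<^sup>2)"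
    unfolding slab_weight_def by (rule expit_le_exp)
  also have "\<dots> = lam / (1 - lam) * exp (1/2 * ln (gam / (alpha + gam))) * exp (alpha / (2 * sg\<^sup>2) * y\<^sup>2)"
    by (simp add: exp_add l)
  also have "\<dots> \<le> lam / (1 - lam) * 1 * exp (alpha / (2 * sg\<^sup>2) * y\<^sup>2)"
    using assms g by (intro mult_right_mono mult_left_mono) auto
  finally show ?thesis by simp
qed

lemma slab_weight_meas: "(\<lambda>y. slab_weight lam alpha gam sg y) \<in> borel_measurable borel"
  unfolding slab_weight_def expit_def by measurable

lemma Delta_facts:
  assumes sg: "sg > 0" and ag: "alpha + gam > 0"
  shows "prob_space (Delta n lam alpha gam sg Y)"
    and "sets (Delta n lam alpha gam sg Y) = sets (PiM {..<n} (\<lambda>_. borel :: real measure))"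
    and "space (Delta n lam alpha gam sg Y) = space (PiM {..<n} (\<lambda>_. borel :: real measure))"
    and "i < n \<Longrightarrow> emeasure (Delta n lam alpha gam sg Y) {\<theta> \<in> space (Delta n lam alpha gam sg Y). \<theta> i \<noteq> 0}
            \<le> ennreal (slab_weight lam alpha gam sg (Y i))"
proof -
  define Mi where "Mi = (\<lambda>i. mixture (slab_weight lam alpha gam sg (Y i))
             (gaussian (Y i) (sg\<^sup>2 / (alpha + gam))) (return borel (0::real)))"
  have D: "Delta n lam alpha gam sg Y = PiM {..<n} Mi" unfolding Delta_def Mi_def ..
  have gp: "prob_space (gaussian mu (sg\<^sup>2 / (alpha + gam)))" for mu
    unfolding gaussian_def using sg ag by (intro prob_space_normal_density) simp
  have gs: "sets (gaussian mu (sg\<^sup>2 / (alpha + gam))) = sets borel" for mu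
    unfolding gaussian_def by simp
  have rp: "prob_space (return borel (0::real))" by (rule prob_space_return) simp
  have w: "0 \<le> slab_weight lam alpha gam sg y" "slab_weight lam alpha gam sg y \<le> 1" for y
    unfolding slab_weight_def using expit_range by (auto intro: less_imp_le)
  note mf = mixture_facts[OF w gp gs rp sets_return]
  have Mp: "prob_space (Mi i)" for i unfolding Mi_def by (rule mf(3))
  have Ms: "sets (Mi i) = sets borel" for i unfolding Mi_def by (rule mf(1))
  show "prob_space (Delta n lam alpha gam sg Y)" unfolding D by (rule prob_space_PiM) (rule Mp)
  show S: "sets (Delta n lam alpha gam sg Y) = sets (PiM {..<n} (\<lambda>_. borel :: real measure))"
    unfolding D by (rule sets_PiM_cong) (auto simp: Ms)
  show "space (Delta n lam alpha gam sg Y) = space (PiM {..<n} (\<lambda>_. borel :: real measure))"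
    using sets_eq_imp_space_eq[OF S] .
  assume i: "i < n"
  have Z: "{x::real. x \<noteq> 0} \<in> sets borel" by measurable
  have "{\<theta> \<in> space (Delta n lam alpha gam sg Y). \<theta> i \<noteq> 0}
      = (\<lambda>\<omega>. \<omega> i) -` {x. x \<noteq> 0} \<inter> space (PiM {..<n} Mi)" unfolding D by auto
  then have "emeasure (Delta n lam alpha gam sg Y) {\<theta> \<in> space (Delta n lam alpha gam sg Y). \<theta> i \<noteq> 0}
      = emeasure (distr (PiM {..<n} Mi) (Mi i) (\<lambda>\<omega>. \<omega> i)) {x. x \<noteq> 0}"
    using i Z Ms by (subst emeasure_distr) (auto simp: D intro: measurable_component_singleton)
  also have "\<dots> = emeasure (Mi i) {x. x \<noteq> 0}"
    using i Mp by (subst distr_PiM_component) auto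
  also have "\<dots> = ennreal (slab_weight lam alpha gam sg (Y i)) * emeasure (gaussian (Y i) (sg\<^sup>2 / (alpha + gam))) {x. x \<noteq> 0}"
    unfolding Mi_def using mf(2)[OF Z] Z by simp
  also have "\<dots> \<le> ennreal (slab_weight lam alpha gam sg (Y i)) * 1"
    by (intro mult_left_mono prob_space.emeasure_le_1[OF gp]) auto
  finally show "emeasure (Delta n lam alpha gam sg Y) {\<theta> \<in> space (Delta n lam alpha gam sg Y). \<theta> i \<noteq> 0}
            \<le> ennreal (slab_weight lam alpha gam sg (Y i))" by simp
qed

lemma key_bound:
  assumes sg: "sg > 0" and ag: "alpha + gam > 0" and m: "m > 0" "m \<le> 1" "m \<le> Mn - 1"
  shows "ennreal m * emeasure (Delta n lam alpha gam sg (\<lambda>i. ts i + z i))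
      {\<theta> \<in> space (PiM {..<n} (\<lambda>_. borel :: real measure)). real (card (supp n \<theta>)) > Mn * real (card (supp n ts))}
    \<le> (\<Sum>i\<in>{i\<in>{..<n}. ts i = 0}. ennreal (slab_weight lam alpha gam sg (z i)))"
proof -
  define Dl where "Dl = Delta n lam alpha gam sg (\<lambda>i. ts i + z i)"
  define J where "J = {i\<in>{..<n}. ts i = 0}"
  define C where "C = (\<lambda>i. {\<theta> \<in> space Dl. \<theta> i \<noteq> (0::real)})"
  define Nf where "Nf = (\<lambda>\<theta>. \<Sum>i\<in>J. indicator (C i) \<theta> :: ennreal)"
  define E where "E = {\<theta> \<in> space (PiM {..<n} (\<lambda>_. borel :: real measure)). real (card (supp n \<theta>)) > Mn * real (card (supp n ts))}"
  define X where "X = {\<theta> \<in> space Dl. ennreal m \<le> Nf \<theta>}"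
  note DF = Delta_facts[OF sg ag, where n=n and lam=lam and Y="\<lambda>i. ts i + z i", folded Dl_def]
  have Csets: "C i \<in> sets Dl" if "i < n" for i
  proof -
    have "C i = (\<lambda>\<omega>. \<omega> i) -` {x. x \<noteq> 0} \<inter> space Dl" unfolding C_def by auto
    moreover have "(\<lambda>\<omega>. \<omega> i) \<in> measurable Dl (borel :: real measure)"
      using that by (simp add: measurable_cong_sets[OF DF(2) refl] measurable_component_singleton)
    moreover have "{x::real. x \<noteq> 0} \<in> sets borel" by measurable
    ultimately show ?thesis by (auto intro: measurable_sets)
  qed
  have Jn: "J \<subseteq> {..<n}" unfolding J_def by auto
  have finJ: "finite J" using Jn finite_subset by blast
  have Nfm: "Nf \<in> borel_measurable Dl"
    unfolding Nf_def using Csets Jn by (intro borel_measurable_sum) (auto intro: borel_measurable_indicator)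
  have Xs: "X \<in> sets Dl"
  proof -
    have "X = Nf -` {ennreal m..} \<inter> space Dl" unfolding X_def by auto
    moreover have "{ennreal m..} \<in> sets borel" by simp
    ultimately show ?thesis using Nfm by (auto intro: measurable_sets)
  qed
  have Nfcard: "Nf \<theta> = of_nat (card {i\<in>J. \<theta> i \<noteq> 0})" if "\<theta> \<in> space Dl" for \<theta>
  proof -
    have "Nf \<theta> = (\<Sum>i\<in>J. if \<theta> i \<noteq> 0 then 1 else 0)"
      unfolding Nf_def C_def using that by (intro sum.cong) (auto simp: indicator_def)
    also have "\<dots> = of_nat (card {i\<in>J. \<theta> i \<noteq> 0})"
      using finJ by (simp add: sum.If_cases Int_def conj_commute)
    finally show ?thesis .
  qed
  have EX: "E \<subseteq> X"
  proof
    fix \<theta> assume th: "\<theta> \<in> E"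
    then have sp: "\<theta> \<in> space Dl" unfolding E_def using DF(3) by simp
    let ?k = "card {i\<in>J. \<theta> i \<noteq> 0}"
    let ?s = "card (supp n ts)"
    have "supp n \<theta> \<subseteq> supp n ts \<union> {i\<in>J. \<theta> i \<noteq> 0}" unfolding supp_def J_def by auto
    then have "card (supp n \<theta>) \<le> card (supp n ts \<union> {i\<in>J. \<theta> i \<noteq> 0})"
      by (intro card_mono) (auto simp: supp_def finJ)
    also have "\<dots> \<le> ?s + ?k" by (rule card_Un_le)
    finally have le: "real (card (supp n \<theta>)) \<le> real ?s + real ?k" by linarith
    have gt: "real (card (supp n \<theta>)) > Mn * real ?s" using th unfolding E_def by simp
    have "m \<le> real ?k"
    proof (cases "?s = 0")
      case True
      then have "?k > 0" using le gt by simp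
      then show ?thesis using m by simp
    next
      case False
      then have "real ?s \<ge> 1" by simp
      have "(Mn - 1) * real ?s < real ?k" using le gt by (simp add: algebra_simps)
      moreover have "Mn - 1 \<le> (Mn - 1) * real ?s"
        using \<open>real ?s \<ge> 1\<close> m by (simp add: mult_le_cancel_left1)
      ultimately show ?thesis using m by linarith
    qed
    then have "ennreal m \<le> Nf \<theta>" using Nfcard[OF sp] by (simp add: ennreal_of_nat_eq_real_of_nat ennreal_leI)
    then show "\<theta> \<in> X" unfolding X_def using sp by simp
  qed
  have "ennreal m * emeasure Dl E \<le> ennreal m * emeasure Dl X"
    using EX Xs by (intro mult_left_mono emeasure_mono) auto
  also have "\<dots> = (\<integral>\<^sup>+ \<theta>. ennreal m * indicator X \<theta> \<partial>Dl)"
    using Xs by (simp add: nn_integral_cmult_indicator)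
  also have "\<dots> \<le> (\<integral>\<^sup>+ \<theta>. Nf \<theta> \<partial>Dl)"
    by (intro nn_integral_mono) (auto simp: X_def indicator_def)
  also have "\<dots> = (\<Sum>i\<in>J. \<integral>\<^sup>+ \<theta>. indicator (C i) \<theta> \<partial>Dl)"
    unfolding Nf_def using Csets Jn by (intro nn_integral_sum) (auto intro: borel_measurable_indicator)
  also have "\<dots> = (\<Sum>i\<in>J. emeasure Dl (C i))"
    using Csets Jn by (intro sum.cong) auto
  also have "\<dots> \<le> (\<Sum>i\<in>J. ennreal (slab_weight lam alpha gam sg (z i)))"
  proof (intro sum_mono)
    fix i assume "i \<in> J"
    then have "i < n" "ts i = 0" unfolding J_def by auto
    then show "emeasure Dl (C i) \<le> ennreal (slab_weight lam alpha gam sg (z i))"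
      using DF(4)[of i] unfolding C_def by simp
  qed
  finally show ?thesis unfolding Dl_def E_def J_def .
qed

lemma nlam_tendsto:
  fixes lam :: "nat \<Rightarrow> real" and a :: real
  assumes a_pos: "a > 0" and lam_rate: "lam \<in> O(\<lambda>n. real n powr (- (a + 1)))"
  shows "(\<lambda>n. real n * lam n) \<longlonglongrightarrow> 0"
proof -
  have 1: "(\<lambda>n. real n * lam n) \<in> O(\<lambda>n. real n * real n powr (- (a + 1)))"
    using lam_rate by (rule landau_o.big.mult_left)
  have 2: "(\<lambda>n. real n * real n powr (- (a + 1))) \<in> o(\<lambda>_. 1)"
    using a_pos by real_asymp
  have "(\<lambda>n. real n * lam n) \<in> o(\<lambda>_. 1)"
    using landau_o.big_small_trans[OF 1 2] .
  from smalloD_tendsto[OF this] show ?thesis by simp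
qed

theorem theorem3:
  fixes D :: "real measure" and sg T alpha gam a :: real
    and lam M :: "nat \<Rightarrow> real"
  assumes D_prob: "prob_space D" and D_sets: "sets D = sets borel"
    and mean0: "integrable D (\<lambda>z. z)" "(\<integral>z. z \<partial>D) = 0"
    and sigma_pos: "sg > 0"
    and subgauss: "\<And>t. integrable D (\<lambda>z. exp (t * z)) \<and>
                        (\<integral>z. exp (t * z) \<partial>D) \<le> exp (sg\<^sup>2 * t\<^sup>2 / 2)"
    and T_pos: "T > 0"
    and mgf_sq: "\<And>t. t \<in> {0<..T} \<Longrightarrow> integrable D (\<lambda>z. exp (t * (z / sg)\<^sup>2))"
    and alpha: "0 < alpha" "alpha < 1" and alpha_T: "alpha < 2 * T"
    and gam: "gam > 0"
    and a_pos: "a > 0"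
    and lam_range: "\<And>n. 0 < lam n \<and> lam n < 1"
    and lam_rate: "lam \<in> O(\<lambda>n. real n powr (- (a + 1)))"
    and M_gt: "\<And>n. M n > 1"
    and M_lim: "filterlim M at_top sequentially"
  shows "(\<lambda>n. SUP theta_star :: nat \<Rightarrow> real.
            \<integral>\<^sup>+ z. emeasure (Delta n (lam n) alpha gam sg (\<lambda>i. theta_star i + z i))
                 {theta \<in> space (PiM {..<n} (\<lambda>_. borel :: real measure)).
                    real (card (supp n theta)) > M n * real (card (supp n theta_star))}
              \<partial>(PiM {..<n} (\<lambda>_. D)))
         \<longlonglongrightarrow> 0"
proof -
  define g where "g = (\<lambda>y::real. exp (alpha / 2 * (y / sg)\<^sup>2))"
  have gint: "integrable D g"
    unfolding g_def using alpha alpha_T by (intro mgf_sq) auto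
  define C0 where "C0 = (\<integral>y. g y \<partial>D)"
  have C0_nn: "0 \<le> C0" unfolding C0_def g_def by (intro integral_nonneg_AE) auto
  have g_eq: "exp (alpha / (2 * sg\<^sup>2) * y\<^sup>2) = g y" for y
    unfolding g_def using sigma_pos by (simp add: power_divide field_simps)
  define r where "r = (\<lambda>n. lam n / (1 - lam n))"
  have r_nn: "0 \<le> r n" for n unfolding r_def using lam_range[of n] by simp
  define mm where "mm = (\<lambda>n. min 1 (M n - 1))"
  have mm_pos: "0 < mm n" for n unfolding mm_def using M_gt[of n] by simp
  define B where "B = (\<lambda>n. real n * r n * C0 / mm n)"
  have ag: "alpha + gam > 0" using alpha gam by simp
  have swm[measurable]: "(\<lambda>y. slab_weight l alpha gam sg y) \<in> borel_measurable borel" for l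
    by (rule slab_weight_meas)
  have bound: "(\<integral>\<^sup>+ z. emeasure (Delta n (lam n) alpha gam sg (\<lambda>i. ts i + z i))
                 {theta \<in> space (PiM {..<n} (\<lambda>_. borel :: real measure)).
                    real (card (supp n theta)) > M n * real (card (supp n ts))}
              \<partial>(PiM {..<n} (\<lambda>_. D))) \<le> ennreal (B n)" for n ts
  proof -
    define P where "P = PiM {..<n} (\<lambda>_. D)"
    define J where "J = {i\<in>{..<n}. ts i = 0}"
    define sw where "sw = (\<lambda>y. slab_weight (lam n) alpha gam sg y)"
    have finJ: "finite J" unfolding J_def by auto
    have cardJ: "card J \<le> n" using card_mono[of "{..<n}" J] unfolding J_def by auto
    have comp: "(\<lambda>z. z i) \<in> measurable P borel" if "i \<in> J" for i
      using that unfolding P_def J_def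
      by (simp add: measurable_cong_sets[OF refl D_sets[symmetric]] measurable_component_singleton)
    have compm: "(\<lambda>z. ennreal (sw (z i))) \<in> borel_measurable P" if "i \<in> J" for i
      using comp[OF that] unfolding sw_def by measurable
    have swD: "(\<lambda>y. ennreal (sw y)) \<in> borel_measurable D"
      unfolding sw_def by (simp add: measurable_cong_sets[OF D_sets refl])
    have step1: "(\<integral>\<^sup>+ z. emeasure (Delta n (lam n) alpha gam sg (\<lambda>i. ts i + z i))
                 {theta \<in> space (PiM {..<n} (\<lambda>_. borel :: real measure)).
                    real (card (supp n theta)) > M n * real (card (supp n ts))} \<partial>P)
        \<le> (\<integral>\<^sup>+ z. ennreal (1 / mm n) * (\<Sum>i\<in>J. ennreal (sw (z i))) \<partial>P)"
    proof (intro nn_integral_mono)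
      fix z
      let ?e = "emeasure (Delta n (lam n) alpha gam sg (\<lambda>i. ts i + z i))
                 {theta \<in> space (PiM {..<n} (\<lambda>_. borel :: real measure)).
                    real (card (supp n theta)) > M n * real (card (supp n ts))}"
      have one: "ennreal (1 / mm n) * ennreal (mm n) = 1"
        using mm_pos[of n] by (simp add: ennreal_mult[symmetric])
      have "?e = ennreal (1 / mm n) * (ennreal (mm n) * ?e)"
        by (simp add: mult.assoc[symmetric] one)
      also have "\<dots> \<le> ennreal (1 / mm n) * (\<Sum>i\<in>J. ennreal (sw (z i)))"
        unfolding J_def sw_def
        by (intro mult_left_mono key_bound[OF sigma_pos ag mm_pos]) (auto simp: mm_def)
      finally show "?e \<le> ennreal (1 / mm n) * (\<Sum>i\<in>J. ennreal (sw (z i)))" .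
    qed
    also have "\<dots> = ennreal (1 / mm n) * (\<Sum>i\<in>J. \<integral>\<^sup>+ z. ennreal (sw (z i)) \<partial>P)"
      using compm by (simp add: nn_integral_cmult borel_measurable_sum nn_integral_sum)
    also have "(\<Sum>i\<in>J. \<integral>\<^sup>+ z. ennreal (sw (z i)) \<partial>P) = (\<Sum>i\<in>J. \<integral>\<^sup>+ y. ennreal (sw y) \<partial>D)"
    proof (intro sum.cong refl)
      fix i assume i: "i \<in> J"
      have "(\<integral>\<^sup>+ y. ennreal (sw y) \<partial>D) = (\<integral>\<^sup>+ y. ennreal (sw y) \<partial>(distr P D (\<lambda>\<omega>. \<omega> i)))"
        unfolding P_def using i D_prob by (subst distr_PiM_component) (auto simp: J_def)
      also have "\<dots> = (\<integral>\<^sup>+ z. ennreal (sw (z i)) \<partial>P)"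
        using i swD unfolding P_def J_def
        by (subst nn_integral_distr) (auto intro: measurable_component_singleton)
      finally show "(\<integral>\<^sup>+ z. ennreal (sw (z i)) \<partial>P) = (\<integral>\<^sup>+ y. ennreal (sw y) \<partial>D)" by simp
    qed
    also have "(\<integral>\<^sup>+ y. ennreal (sw y) \<partial>D) \<le> (\<integral>\<^sup>+ y. ennreal (r n * g y) \<partial>D)"
    proof (intro nn_integral_mono ennreal_leI)
      fix y
      show "sw y \<le> r n * g y"
        unfolding sw_def r_def g_eq[symmetric]
        using slab_weight_le[OF _ _ alpha(1) gam, of "lam n" sg y] lam_range[of n] by blast
    qed
    also have "\<dots> = ennreal (r n * C0)"
      unfolding C0_def using gint r_nn[of n]
      by (subst nn_integral_eq_integral) (auto simp: g_def)
    finally have "(\<integral>\<^sup>+ z. emeasure (Delta n (lam n) alpha gam sg (\<lambda>i. ts i + z i))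
                 {theta \<in> space (PiM {..<n} (\<lambda>_. borel :: real measure)).
                    real (card (supp n theta)) > M n * real (card (supp n ts))} \<partial>P)
        \<le> ennreal (1 / mm n) * (\<Sum>i\<in>J. ennreal (r n * C0))"
      by (simp add: mult_left_mono sum_mono)
    also have "\<dots> = ennreal (1 / mm n * (real (card J) * (r n * C0)))"
    proof -
      have "(\<Sum>i\<in>J. ennreal (r n * C0)) = ennreal (real (card J)) * ennreal (r n * C0)"
        by (simp add: ennreal_of_nat_eq_real_of_nat)
      also have "\<dots> = ennreal (real (card J) * (r n * C0))"
        using r_nn[of n] C0_nn by (rule ennreal_mult[symmetric, OF of_nat_0_le_iff mult_nonneg_nonneg])
      finally have "ennreal (1 / mm n) * (\<Sum>i\<in>J. ennreal (r n * C0))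
          = ennreal (1 / mm n) * ennreal (real (card J) * (r n * C0))" by simp
      also have "\<dots> = ennreal (1 / mm n * (real (card J) * (r n * C0)))"
        using mm_pos[of n] r_nn[of n] C0_nn by (intro ennreal_mult[symmetric]) auto
      finally show ?thesis .
    qed
    also have "\<dots> \<le> ennreal (B n)"
      unfolding B_def using mm_pos[of n] r_nn[of n] C0_nn cardJ
    proof (intro ennreal_leI)
      have "real (card J) * (r n * C0) \<le> real n * (r n * C0)"
        using cardJ r_nn[of n] C0_nn by (intro mult_right_mono) auto
      then show "1 / mm n * (real (card J) * (r n * C0)) \<le> real n * r n * C0 / mm n"
        using mm_pos[of n] by (simp add: divide_right_mono mult.assoc)
    qed
    finally show ?thesis unfolding P_def .
  qed
  have t0: "(\<lambda>n. real n * lam n) \<longlonglongrightarrow> 0" by (rule nlam_tendsto[OF a_pos lam_rate])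
  have lam0: "lam \<longlonglongrightarrow> 0"
  proof (rule tendsto_sandwich[OF _ _ tendsto_const t0])
    show "\<forall>\<^sub>F n in sequentially. 0 \<le> lam n" using lam_range by (simp add: less_imp_le)
    show "\<forall>\<^sub>F n in sequentially. lam n \<le> real n * lam n"
      using eventually_ge_at_top[of "1::nat"]
    proof eventually_elim
      case (elim n) then show ?case using lam_range[of n] by (simp add: mult_le_cancel_right1)
    qed
  qed
  have mm1: "mm \<longlonglongrightarrow> 1"
  proof (rule tendsto_eventually)
    show "\<forall>\<^sub>F n in sequentially. mm n = 1"
      using filterlim_at_top[THEN iffD1, OF M_lim, rule_format, of 2]
      by eventually_elim (simp add: mm_def)
  qed
  have Beq: "B n = real n * lam n / (1 - lam n) * C0 / mm n" for n
    unfolding B_def r_def by simp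
  have "(\<lambda>n. real n * lam n / (1 - lam n) * C0 / mm n) \<longlonglongrightarrow> 0 / (1 - 0) * C0 / 1"
    by (intro tendsto_intros t0 lam0 mm1) auto
  moreover have Bfun: "B = (\<lambda>n. real n * lam n / (1 - lam n) * C0 / mm n)" using Beq by (intro ext)
  ultimately have B0: "B \<longlonglongrightarrow> 0" by simp
  then have "(\<lambda>n. ennreal (B n)) \<longlonglongrightarrow> ennreal 0" by (rule tendsto_ennrealI)
  then have EB: "(\<lambda>n. ennreal (B n)) \<longlonglongrightarrow> 0" by simp
  show ?thesis
    by (rule tendsto_sandwich[OF _ _ tendsto_const EB])
       (auto intro!: always_eventually SUP_least bound)
qed

end
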